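(* In the standing setting, there exists $c=c(n,p,M_0)$ such that for all $t\in[0,T^* )$ and all $x\in\mathbb S^n$, $$0<c^{-1}\le\sinh(u(t,x))\,e^{-\frac{t}{n^p}}\le c\qquad\text{and}\qquad \coth u(t,x)-1\le c\,e^{-\frac{2}{n^p}t}.$$
   Context: Standing setting: $n\ge2$; $\mathbb H^{n+1}$ in geodesic polar coordinates around a fixed point, metric $dr^2+\sinh^2r\,\sigma_{ij}dx^idx^j$ ($\sigma$ round metric on $\mathbb S^n$). $\Gamma\subset\mathbb R^n$ is an open convex symmetric cone containing $\Gamma_+=\{\kappa_i>0\ \forall i\}$; $F\in C^\infty(\Gamma)\cap C^0(\bar\Gamma)$ is symmetric, monotone ($\partial F/\partial\kappa_i>0$), concave, $1$-homogeneous, with $F>0$ on $\Gamma$, $F=0$ on $\partial\Gamma$, $F(1,\dots,1)=n$. $p>0$, and $\Gamma=\Gamma_+$ if $p>1$. $M_0$ is a smooth closed embedded hypersurface whose principal curvatures lie in $\Gamma$ everywhere ($F$-admissible) and which is a graph $M_0=\operatorname{graph}u(0,\cdot)$ over $\mathbb S^n$. The flow is $\dot x=F^{-p}\nu$, $x(0)=M_0$ ($\nu$ outward normal, $F$ evaluated at the principal curvatures of $M_t$), on its maximal smooth existence interval $[0,T^* )$, where the leaves $M_t$ are $F$-admissible graphs $\operatorname{graph}u(t,\cdot)$ over $\mathbb S^n$. *)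

theory Defs
  imports "HOL-Analysis.Analysis"
begin

definition dd :: "('a::real_normed_vector \<Rightarrow> 'b::real_normed_vector) \<Rightarrow> 'a \<Rightarrow> 'a \<Rightarrow> 'b" where
  "dd f x v = vector_derivative (\<lambda>s. f (x + s *\<^sub>R v)) (at 0)"

fun ddn :: "'a::real_normed_vector list \<Rightarrow> ('a \<Rightarrow> 'b::real_normed_vector) \<Rightarrow> 'a \<Rightarrow> 'b" where
  "ddn [] f = f"
| "ddn (v # vs) f = (\<lambda>x. dd (ddn vs f) x v)"

definition smooth_on :: "'a::euclidean_space set \<Rightarrow> ('a \<Rightarrow> 'b::real_normed_vector) \<Rightarrow> bool" where
  "smooth_on S f \<longleftrightarrow> open S \<and>
     (\<forall>vs. continuous_on S (ddn vs f) \<and>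
       (\<forall>x\<in>S. \<forall>v. (\<lambda>s. ddn vs f (x + s *\<^sub>R v)) differentiable (at 0)))"

definition smooth_on_set :: "'a::euclidean_space set \<Rightarrow> ('a \<Rightarrow> 'b::real_normed_vector) \<Rightarrow> bool" where
  "smooth_on_set A f \<longleftrightarrow> (\<exists>S g. A \<subseteq> S \<and> smooth_on S g \<and> (\<forall>x\<in>A. g x = f x))"

text \<open>Minkowski product on R x R^(n+1); H^(n+1) = {X. mink X X = -1, first coord > 0}.
  The point at geodesic polar coordinates (r, x), x in S^n, is (cosh r, sinh r x),
  which realises the metric dr^2 + sinh^2 r sigma.\<close>
definition mink :: "real \<times> (real^'m) \<Rightarrow> real \<times> (real^'m) \<Rightarrow> real" where
  "mink X Y = - fst X * fst Y + snd X \<bullet> snd Y"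

definition sphere_n :: "(real^'m) set" where
  "sphere_n = {x. norm x = 1}"

text \<open>Position map of the radial graph of w, w : S^n -> R, extended 0-homogeneously to R^(n+1) - {0}.\<close>
definition gpos :: "(real^'m \<Rightarrow> real) \<Rightarrow> real^'m \<Rightarrow> real \<times> (real^'m)" where
  "gpos w y = (cosh (w (y /\<^sub>R norm y)), sinh (w (y /\<^sub>R norm y)) *\<^sub>R (y /\<^sub>R norm y))"

text \<open>Radial unit vector field d/dr at the point of the graph over x.\<close>
definition radial :: "(real^'m \<Rightarrow> real) \<Rightarrow> real^'m \<Rightarrow> real \<times> (real^'m)" where
  "radial w x = (sinh (w x), cosh (w x) *\<^sub>R x)"

definition tang :: "real^'m \<Rightarrow> (real^'m) set" where
  "tang x = {v. v \<bullet> x = 0}"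

definition gmet :: "(real^'m \<Rightarrow> real) \<Rightarrow> real^'m \<Rightarrow> real^'m \<Rightarrow> real^'m \<Rightarrow> real" where
  "gmet w x v v' = mink (dd (gpos w) x v) (dd (gpos w) x v')"

definition sff :: "(real^'m \<Rightarrow> real) \<Rightarrow> real^'m \<Rightarrow> real \<times> (real^'m) \<Rightarrow> real^'m \<Rightarrow> real^'m \<Rightarrow> real" where
  "sff w x N v v' = - mink (dd (\<lambda>y. dd (gpos w) y v') x v) N"

definition outer_normal :: "(real^'m \<Rightarrow> real) \<Rightarrow> real^'m \<Rightarrow> real \<times> (real^'m) \<Rightarrow> bool" where
  "outer_normal w x N \<longleftrightarrow> mink N N = 1 \<and> mink N (gpos w x) = 0 \<and>
     (\<forall>v\<in>tang x. mink N (dd (gpos w) x v) = 0) \<and> mink N (radial w x) > 0"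

definition principal_curvatures ::
  "(real^'m \<Rightarrow> real) \<Rightarrow> real^'m \<Rightarrow> real \<times> (real^'m) \<Rightarrow> real^'n \<Rightarrow> bool" where
  "principal_curvatures w x N \<kappa> \<longleftrightarrow>
     (\<exists>e :: 'n \<Rightarrow> real^'m. (\<forall>i. e i \<in> tang x) \<and>
        (\<forall>i j. gmet w x (e i) (e j) = (if i = j then 1 else 0)) \<and>
        (\<forall>i j. sff w x N (e i) (e j) = (if i = j then \<kappa> $ i else 0)))"

definition pos_cone :: "(real^'n) set" where
  "pos_cone = {\<kappa>. \<forall>i. \<kappa> $ i > 0}"

definition admissible_cone :: "(real^'n) set \<Rightarrow> bool" where
  "admissible_cone \<Gamma> \<longleftrightarrow> open \<Gamma> \<and> convex \<Gamma> \<and>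
     (\<forall>\<kappa>\<in>\<Gamma>. \<forall>a>0. a *\<^sub>R \<kappa> \<in> \<Gamma>) \<and>
     (\<forall>\<kappa>\<in>\<Gamma>. \<forall>\<pi>. \<pi> permutes (UNIV :: 'n set) \<longrightarrow> (\<chi> i. \<kappa> $ \<pi> i) \<in> \<Gamma>) \<and>
     pos_cone \<subseteq> \<Gamma>"

definition admissible_F :: "(real^'n) set \<Rightarrow> (real^'n \<Rightarrow> real) \<Rightarrow> bool" where
  "admissible_F \<Gamma> F \<longleftrightarrow> admissible_cone \<Gamma> \<and>
     smooth_on \<Gamma> F \<and> continuous_on (closure \<Gamma>) F \<and>
     (\<forall>\<kappa>\<in>\<Gamma>. \<forall>\<pi>. \<pi> permutes (UNIV :: 'n set) \<longrightarrow> F (\<chi> i. \<kappa> $ \<pi> i) = F \<kappa>) \<and>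
     (\<forall>\<kappa>\<in>\<Gamma>. \<forall>i. dd F \<kappa> (axis i 1) > 0) \<and>
     concave_on \<Gamma> F \<and>
     (\<forall>\<kappa>\<in>\<Gamma>. \<forall>a>0. F (a *\<^sub>R \<kappa>) = a * F \<kappa>) \<and>
     (\<forall>\<kappa>\<in>\<Gamma>. F \<kappa> > 0) \<and> (\<forall>\<kappa>\<in>frontier \<Gamma>. F \<kappa> = 0) \<and>
     F (\<chi> i. 1) = real CARD('n)"

definition time_int :: "ereal \<Rightarrow> real set" where
  "time_int T = {t. 0 \<le> t \<and> ereal t < T}"

text \<open>u t x (x in S^n) is the radial function of M_t; the leaves are smooth in (t,x), F-admissible,
  and move with normal velocity F^(-p) in the outward normal direction.\<close>
definition flow_solution ::
  "(real^'n) set \<Rightarrow> (real^'n \<Rightarrow> real) \<Rightarrow> real \<Rightarrow> (real \<Rightarrow> real^'m \<Rightarrow> real) \<Rightarrow> ereal \<Rightarrow> bool" where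
  "flow_solution \<Gamma> F p u T \<longleftrightarrow>
     smooth_on_set (time_int T \<times> (UNIV - {0})) (\<lambda>(t, y). u t (y /\<^sub>R norm y)) \<and>
     (\<forall>t\<in>time_int T. \<forall>x\<in>sphere_n.
        u t x > 0 \<and>
        (\<exists>N. outer_normal (u t) x N) \<and>
        (\<forall>N. outer_normal (u t) x N \<longrightarrow>
           (\<exists>\<kappa>::real^'n. principal_curvatures (u t) x N \<kappa>) \<and>
           (\<forall>\<kappa>. principal_curvatures (u t) x N \<kappa> \<longrightarrow>
              \<kappa> \<in> \<Gamma> \<and>
              mink (vector_derivative (\<lambda>s. gpos (u s) x) (at t within time_int T)) N
                = F \<kappa> powr (- p))))"

definition maximal_flow_solution ::
  "(real^'n) set \<Rightarrow> (real^'n \<Rightarrow> real) \<Rightarrow> real \<Rightarrow> (real \<Rightarrow> real^'m \<Rightarrow> real) \<Rightarrow> ereal \<Rightarrow> bool" where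
  "maximal_flow_solution \<Gamma> F p u T \<longleftrightarrow> T > 0 \<and> flow_solution \<Gamma> F p u T \<and>
     \<not> (\<exists>T' u'. T' > T \<and> flow_solution \<Gamma> F p u' T' \<and>
          (\<forall>t\<in>time_int T. \<forall>x\<in>sphere_n. u' t x = u t x))"

end

theory Submission
  imports Defs
begin


lemma smooth_line_deriv0:
  fixes g :: "'a::euclidean_space \<Rightarrow> real"
  assumes "smooth_on S g" "z \<in> S"
  shows "((\<lambda>s. ddn vs g (z + s *\<^sub>R w)) has_real_derivative ddn (w#vs) g z) (at 0)"
proof -
  have d: "(\<lambda>s. ddn vs g (z + s *\<^sub>R w)) differentiable (at 0)"
    using assms unfolding smooth_on_def by blast
  have "((\<lambda>s. ddn vs g (z + s *\<^sub>R w)) has_vector_derivative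
      vector_derivative (\<lambda>s. ddn vs g (z + s *\<^sub>R w)) (at 0)) (at 0)"
    using d vector_derivative_works by blast
  then show ?thesis
    by (simp add: dd_def has_real_derivative_iff_has_vector_derivative)
qed

lemma smooth_line_deriv:
  fixes g :: "'a::euclidean_space \<Rightarrow> real"
  assumes "smooth_on S g" "z + s *\<^sub>R w \<in> S"
  shows "((\<lambda>r. ddn vs g (z + r *\<^sub>R w)) has_real_derivative ddn (w#vs) g (z + s *\<^sub>R w)) (at s)"
proof -
  have "((\<lambda>r. ddn vs g ((z + s *\<^sub>R w) + r *\<^sub>R w)) has_real_derivative ddn (w#vs) g (z + s *\<^sub>R w)) (at 0)"
    by (rule smooth_line_deriv0[OF assms])
  then have "((\<lambda>r. ddn vs g (z + (r + s) *\<^sub>R w)) has_real_derivative ddn (w#vs) g (z + s *\<^sub>R w)) (at 0)"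
    by (simp add: algebra_simps scaleR_add_left)
  then show ?thesis
    using DERIV_shift[of "\<lambda>r. ddn vs g (z + r *\<^sub>R w)" _ 0 s] by simp
qed



lemma G_first_deriv:
  fixes h h1 \<rho> \<rho>1 :: "real \<Rightarrow> real" and x v :: "'b::real_normed_vector"
  assumes hd: "\<And>s. (h has_real_derivative h1 s) (at s)"
    and rd: "\<And>s. (\<rho> has_real_derivative \<rho>1 s) (at s)"
  shows "((\<lambda>s. (cosh (h s), (sinh (h s) * \<rho> s) *\<^sub>R (x + s *\<^sub>R v))) has_vector_derivative
     (sinh (h s) * h1 s, (cosh (h s) * h1 s * \<rho> s + sinh (h s) * \<rho>1 s) *\<^sub>R (x + s *\<^sub>R v)
        + (sinh (h s) * \<rho> s) *\<^sub>R v)) (at s)"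
proof -
  have a: "((\<lambda>s. cosh (h s)) has_vector_derivative sinh (h s) * h1 s) (at s)"
    unfolding has_real_derivative_iff_has_vector_derivative[symmetric]
    by (rule derivative_eq_intros hd | simp)+
  have b: "((\<lambda>s. sinh (h s) * \<rho> s) has_real_derivative (cosh (h s) * h1 s * \<rho> s + sinh (h s) * \<rho>1 s)) (at s)"
    by (rule derivative_eq_intros hd rd | simp)+
  have c: "((\<lambda>s. x + s *\<^sub>R v) has_vector_derivative v) (at s)"
    by (rule derivative_eq_intros | simp)+
  have d: "((\<lambda>s. (sinh (h s) * \<rho> s) *\<^sub>R (x + s *\<^sub>R v)) has_vector_derivative
     (sinh (h s) * \<rho> s) *\<^sub>R v + (cosh (h s) * h1 s * \<rho> s + sinh (h s) * \<rho>1 s) *\<^sub>R (x + s *\<^sub>R v)) (at s)"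
    by (rule has_vector_derivative_scaleR[OF b c])
  show ?thesis using has_vector_derivative_Pair[OF a d] by (simp add: add.commute)
qed

lemma G_second_deriv:
  fixes h h1 \<rho> \<rho>1 :: "real \<Rightarrow> real" and x v :: "'b::real_normed_vector"
  assumes hd: "\<And>s. (h has_real_derivative h1 s) (at s)"
    and h1d: "(h1 has_real_derivative h2) (at 0)"
    and rd: "\<And>s. (\<rho> has_real_derivative \<rho>1 s) (at s)"
    and r1d: "(\<rho>1 has_real_derivative \<rho>2) (at 0)"
    and h10: "h1 0 = 0" and r0: "\<rho> 0 = 1" and r10: "\<rho>1 0 = 0"
  shows "((\<lambda>s. (sinh (h s) * h1 s, (cosh (h s) * h1 s * \<rho> s + sinh (h s) * \<rho>1 s) *\<^sub>R (x + s *\<^sub>R v)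
        + (sinh (h s) * \<rho> s) *\<^sub>R v)) has_vector_derivative
     (sinh (h 0) * h2, (cosh (h 0) * h2 + sinh (h 0) * \<rho>2) *\<^sub>R x)) (at 0)"
proof -
  have hd0: "(h has_real_derivative 0) (at 0)" using hd[of 0] h10 by simp
  have rd0: "(\<rho> has_real_derivative 0) (at 0)" using rd[of 0] r10 by simp
  have a: "((\<lambda>s. sinh (h s) * h1 s) has_vector_derivative sinh (h 0) * h2) (at 0)"
    unfolding has_real_derivative_iff_has_vector_derivative[symmetric]
    by (rule derivative_eq_intros hd0 h1d | simp add: h10)+
  have b: "((\<lambda>s. cosh (h s) * h1 s * \<rho> s + sinh (h s) * \<rho>1 s) has_real_derivative
      (cosh (h 0) * h2 + sinh (h 0) * \<rho>2)) (at 0)"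
    by (rule derivative_eq_intros hd0 h1d rd0 r1d | simp add: h10 r0 r10)+
  have c: "((\<lambda>s. x + s *\<^sub>R v) has_vector_derivative v) (at 0)"
    by (rule derivative_eq_intros | simp)+
  have d: "((\<lambda>s. (cosh (h s) * h1 s * \<rho> s + sinh (h s) * \<rho>1 s) *\<^sub>R (x + s *\<^sub>R v)) has_vector_derivative
      (cosh (h 0) * h2 + sinh (h 0) * \<rho>2) *\<^sub>R x) (at 0)"
    using has_vector_derivative_scaleR[OF b c] by (simp add: h10 r10)
  have b2: "((\<lambda>s. sinh (h s) * \<rho> s) has_real_derivative 0) (at 0)"
    by (rule derivative_eq_intros hd0 rd0 | simp)+
  have e: "((\<lambda>s. (sinh (h s) * \<rho> s) *\<^sub>R v) has_vector_derivative 0) (at 0)"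
    using has_vector_derivative_scaleR[OF b2 has_vector_derivative_const[of v]] by simp
  show ?thesis using has_vector_derivative_Pair[OF a has_vector_derivative_add[OF d e]] by simp
qed


lemma rho_deriv:
  fixes a :: real assumes "a \<ge> 0"
  shows "((\<lambda>s. (1 + a * s\<^sup>2) powr (-1/2)) has_real_derivative (- a * s * (1 + a * s\<^sup>2) powr (-3/2))) (at s)"
proof -
  have p: "0 < 1 + a * s\<^sup>2" using assms by (simp add: add_pos_nonneg)
  show ?thesis
    by (rule derivative_eq_intros refl | simp add: p)+
qed

lemma rho1_deriv:
  fixes a :: real assumes "a \<ge> 0"
  shows "((\<lambda>s. - a * s * (1 + a * s\<^sup>2) powr (-3/2)) has_real_derivative (- a)) (at 0)"
proof -
  show ?thesis
    apply (rule derivative_eq_intros refl | simp)+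
    done
qed

lemma norm_line:
  fixes x v :: "real^'m"
  assumes "norm x = 1" "v \<bullet> x = 0"
  shows "norm (x + s *\<^sub>R v) = sqrt (1 + (v \<bullet> v) * s\<^sup>2)"
proof -
  have "(norm (x + s *\<^sub>R v))\<^sup>2 = (x + s *\<^sub>R v) \<bullet> (x + s *\<^sub>R v)" by (simp add: power2_norm_eq_inner)
  also have "\<dots> = x \<bullet> x + 2 * s * (v \<bullet> x) + s\<^sup>2 * (v \<bullet> v)"
    by (simp add: inner_add_left inner_add_right inner_commute power2_eq_square algebra_simps)
  also have "x \<bullet> x = 1" using assms(1) by (simp add: norm_eq_1)
  finally have "(norm (x + s *\<^sub>R v))\<^sup>2 = 1 + (v \<bullet> v) * s\<^sup>2" using assms(2) by simp
  then show ?thesis by (metis norm_ge_zero real_sqrt_unique)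
qed

lemma SP:
  fixes w :: "real^'m \<Rightarrow> real" and x v :: "real^'m" and h h1 :: "real \<Rightarrow> real"
  assumes x: "norm x = 1" and v: "v \<bullet> x = 0"
    and hd: "\<And>s. (h has_real_derivative h1 s) (at s)"
    and h1d: "(h1 has_real_derivative h2) (at 0)"
    and h10: "h1 0 = 0"
    and hw: "\<And>s. h s = w ((x + s *\<^sub>R v) /\<^sub>R norm (x + s *\<^sub>R v))"
  shows "dd (gpos w) x v = (0, sinh (w x) *\<^sub>R v)"
    and "dd (\<lambda>y. dd (gpos w) y v) x v = (sinh (w x) * h2, (cosh (w x) * h2 - (v \<bullet> v) * sinh (w x)) *\<^sub>R x)"
proof -
  define a where "a = v \<bullet> v"
  have a0: "a \<ge> 0" unfolding a_def by simp
  define \<rho> where "\<rho> = (\<lambda>s::real. (1 + a * s\<^sup>2) powr (-1/2))"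
  define \<rho>1 where "\<rho>1 = (\<lambda>s::real. - a * s * (1 + a * s\<^sup>2) powr (-3/2))"
  have rd: "\<And>s. (\<rho> has_real_derivative \<rho>1 s) (at s)" unfolding \<rho>_def \<rho>1_def by (rule rho_deriv[OF a0])
  have r1d: "(\<rho>1 has_real_derivative (-a)) (at 0)" unfolding \<rho>1_def by (rule rho1_deriv[OF a0])
  have r0: "\<rho> 0 = 1" and r10: "\<rho>1 0 = 0" unfolding \<rho>_def \<rho>1_def by simp_all
  have hx: "h 0 = w x" using hw[of 0] x by simp
  have Geq: "gpos w (x + s *\<^sub>R v) = (cosh (h s), (sinh (h s) * \<rho> s) *\<^sub>R (x + s *\<^sub>R v))" for s
  proof -
    have p: "0 < 1 + a * s\<^sup>2" using a0 by (simp add: add_pos_nonneg)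
    have n: "norm (x + s *\<^sub>R v) = sqrt (1 + a * s\<^sup>2)" using norm_line[OF x v] a_def by simp
    have "inverse (sqrt (1 + a * s\<^sup>2)) = \<rho> s"
    proof -
      have "(1 + a * s\<^sup>2) powr (-1/2) = inverse ((1 + a * s\<^sup>2) powr (1/2))"
        using powr_minus[of "1 + a * s\<^sup>2" "1/2"] by simp
      then show ?thesis using p by (simp add: powr_half_sqrt \<rho>_def)
    qed
    then show ?thesis unfolding gpos_def hw[of s] using n by (simp add: divide_inverse_commute)
  qed
  define G1 where "G1 = (\<lambda>s. (sinh (h s) * h1 s, (cosh (h s) * h1 s * \<rho> s + sinh (h s) * \<rho>1 s) *\<^sub>R (x + s *\<^sub>R v)
        + (sinh (h s) * \<rho> s) *\<^sub>R v))"
  have GD: "((\<lambda>s. gpos w (x + s *\<^sub>R v)) has_vector_derivative G1 s) (at s)" for s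
    unfolding Geq G1_def by (rule G_first_deriv[OF hd rd])
  have dd1: "dd (gpos w) (x + s *\<^sub>R v) v = G1 s" for s
  proof -
    have "((\<lambda>s. gpos w (x + s *\<^sub>R v)) \<circ> (\<lambda>r. s + r) has_vector_derivative 1 *\<^sub>R G1 s) (at 0)"
      by (rule vector_diff_chain_at) (auto intro!: derivative_eq_intros GD)
    then have "((\<lambda>r. gpos w (x + s *\<^sub>R v + r *\<^sub>R v)) has_vector_derivative G1 s) (at 0)"
      by (simp add: o_def scaleR_add_left add.assoc)
    then show ?thesis unfolding dd_def by (rule vector_derivative_at)
  qed
  show "dd (gpos w) x v = (0, sinh (w x) *\<^sub>R v)"
    using dd1[of 0] by (simp add: G1_def h10 r0 r10 hx)
  have "(G1 has_vector_derivative (sinh (h 0) * h2, (cosh (h 0) * h2 + sinh (h 0) * (-a)) *\<^sub>R x)) (at 0)"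
    unfolding G1_def by (rule G_second_deriv[OF hd h1d rd r1d h10 r0 r10])
  then have "vector_derivative G1 (at 0) = (sinh (h 0) * h2, (cosh (h 0) * h2 + sinh (h 0) * (-a)) *\<^sub>R x)"
    by (rule vector_derivative_at)
  moreover have "(\<lambda>s. dd (gpos w) (x + s *\<^sub>R v) v) = G1" using dd1 by auto
  ultimately show "dd (\<lambda>y. dd (gpos w) y v) x v = (sinh (w x) * h2, (cosh (w x) * h2 - (v \<bullet> v) * sinh (w x)) *\<^sub>R x)"
    unfolding dd_def[of "\<lambda>y. dd (gpos w) y v"] by (simp add: hx a_def algebra_simps)
qed



lemma second_deriv_max:
  fixes h h1 :: "real \<Rightarrow> real"
  assumes hd: "\<And>s. (h has_real_derivative h1 s) (at s)"
    and h1d: "(h1 has_real_derivative h2) (at 0)"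
    and mx: "\<And>s. h s \<le> h 0"
  shows "h1 0 = 0 \<and> h2 \<le> 0"
proof -
  have z: "h1 0 = 0"
    by (rule DERIV_local_max[OF hd[of 0], of 1]) (use mx in auto)
  have "h2 \<le> 0"
  proof (rule ccontr)
    assume "\<not> h2 \<le> 0"
    then have "h2 > 0" by simp
    from DERIV_pos_inc_right[OF h1d this] obtain d where d: "d > 0"
      and dd: "\<And>e. e > 0 \<Longrightarrow> e < d \<Longrightarrow> h1 0 < h1 (0 + e)" by blast
    have cont: "continuous_on {0..d/2} h"
      using hd by (meson DERIV_isCont continuous_at_imp_continuous_on)
    have "h 0 < h (d/2)"
    proof (rule DERIV_pos_imp_increasing_open[OF _ _ cont])
      show "0 < d/2" using d by simp
      fix y assume "0 < y" "y < d/2"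
      then show "\<exists>z. (h has_real_derivative z) (at y) \<and> 0 < z"
        using hd[of y] dd[of y] z by auto
    qed
    then show False using mx[of "d/2"] by simp
  qed
  then show ?thesis using z by simp
qed

lemma second_deriv_min:
  fixes h h1 :: "real \<Rightarrow> real"
  assumes hd: "\<And>s. (h has_real_derivative h1 s) (at s)"
    and h1d: "(h1 has_real_derivative h2) (at 0)"
    and mn: "\<And>s. h 0 \<le> h s"
  shows "h1 0 = 0 \<and> h2 \<ge> 0"
proof -
  have "(\<lambda>s. - h1 s) 0 = 0 \<and> - h2 \<le> 0"
    by (rule second_deriv_max[of "\<lambda>s. - h s"]) (auto intro!: derivative_eq_intros hd h1d mn)
  then show ?thesis by simp
qed



lemma normal_at_crit:
  fixes w :: "real^'m \<Rightarrow> real" and x :: "real^'m" and N :: "real \<times> (real^'m)"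
  assumes x: "norm x = 1" and U: "w x > 0"
    and dd0: "\<And>v. v \<in> tang x \<Longrightarrow> dd (gpos w) x v = (0, sinh (w x) *\<^sub>R v)"
    and N: "outer_normal w x N"
  shows "N = (sinh (w x), cosh (w x) *\<^sub>R x)"
proof -
  obtain a b where Nab: "N = (a, b)" by (cases N)
  define U where "U = w x"
  have sU: "sinh U > 0" using U U_def by simp
  have cU: "cosh U > 0" by simp
  have xx: "x \<bullet> x = 1" using x by (simp add: norm_eq_1)
  have gx: "gpos w x = (cosh U, sinh U *\<^sub>R x)" unfolding gpos_def U_def using x by simp
  have e1: "- a * a + b \<bullet> b = 1" using N Nab unfolding outer_normal_def mink_def by simp
  have e2: "- a * cosh U + sinh U * (b \<bullet> x) = 0" using N Nab gx unfolding outer_normal_def mink_def by simp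
  have e4: "- a * sinh U + cosh U * (b \<bullet> x) > 0" using N Nab unfolding outer_normal_def mink_def radial_def U_def by simp
  define \<beta> where "\<beta> = b \<bullet> x"
  define v where "v = b - \<beta> *\<^sub>R x"
  have vt: "v \<in> tang x" unfolding tang_def v_def \<beta>_def using xx by (simp add: inner_diff_left)
  have "mink N (dd (gpos w) x v) = 0" using N vt unfolding outer_normal_def by blast
  then have "sinh U * (b \<bullet> v) = 0" using dd0[OF vt] Nab U_def unfolding mink_def by simp
  then have bv: "b \<bullet> v = 0" using sU by simp
  have vv: "v \<bullet> v = b \<bullet> b - \<beta>\<^sup>2"
    unfolding v_def \<beta>_def using xx by (simp add: inner_diff_left inner_diff_right inner_commute power2_eq_square)
  have bb: "b \<bullet> b = \<beta>\<^sup>2"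
    using bv unfolding v_def \<beta>_def by (simp add: inner_diff_right inner_commute power2_eq_square)
  have v0: "v = 0" using vv bb by simp
  have hyp: "cosh U ^ 2 - sinh U ^ 2 = 1" by (simp add: cosh_square_eq)
  have a_eq: "a = \<beta> * sinh U / cosh U" using e2 cU unfolding \<beta>_def by (simp add: field_simps)
  have "\<beta>\<^sup>2 * (cosh U ^ 2 - sinh U ^ 2) = cosh U ^ 2"
    using e1 bb a_eq cU by (simp add: field_simps power2_eq_square)
  then have b2: "\<beta>\<^sup>2 = cosh U ^ 2" using hyp by simp
  have "- a * sinh U + cosh U * \<beta> = \<beta> * (cosh U ^ 2 - sinh U ^ 2) / cosh U"
    using a_eq cU by (simp add: field_simps power2_eq_square)
  then have "\<beta> / cosh U > 0" using e4 hyp unfolding \<beta>_def by simp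
  then have bp: "\<beta> > 0" using cU by (simp add: zero_less_divide_iff)
  have bc: "\<beta> = cosh U" using b2 bp cU by (metis power2_eq_iff_nonneg less_imp_le)
  have "a = sinh U" using a_eq bc cU by simp
  moreover have "b = cosh U *\<^sub>R x" using v0 bc unfolding v_def by simp
  ultimately show ?thesis using Nab U_def by simp
qed



lemma cone_up:
  fixes \<Gamma> :: "(real^'n) set"
  assumes G: "admissible_cone \<Gamma>" and k: "\<kappa> \<in> \<Gamma>" and w: "\<And>i. w $ i \<ge> 0"
  shows "\<kappa> + w \<in> \<Gamma>"
proof -
  have op: "open \<Gamma>" and cv: "convex \<Gamma>" and cone: "\<And>k a. k \<in> \<Gamma> \<Longrightarrow> a > 0 \<Longrightarrow> a *\<^sub>R k \<in> \<Gamma>"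
    and pc: "pos_cone \<subseteq> \<Gamma>" using G unfolding admissible_cone_def by auto
  obtain \<delta> where d: "\<delta> > 0" "ball \<kappa> \<delta> \<subseteq> \<Gamma>" using op k open_contains_ball by blast
  define d where "d = \<delta> / (2 * real CARD('n))"
  have dpos: "d > 0" unfolding d_def using d by simp
  define c :: "real^'n" where "c = (\<chi> i. d)"
  have "norm c \<le> (\<Sum>i\<in>UNIV. \<bar>c$i\<bar>)" by (rule norm_le_l1_cart)
  also have "\<dots> = real CARD('n) * d" unfolding c_def using dpos by simp
  also have "\<dots> = \<delta>/2" unfolding d_def by simp
  finally have "norm c < \<delta>" using d by simp
  then have k1: "\<kappa> - c \<in> \<Gamma>" using d by (auto simp: dist_norm)
  have "w + c \<in> pos_cone" unfolding pos_cone_def c_def using w dpos by (simp add: add_nonneg_pos)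
  then have k2: "w + c \<in> \<Gamma>" using pc by blast
  have "(1/2) *\<^sub>R (\<kappa> - c) + (1 - 1/2) *\<^sub>R (w + c) \<in> \<Gamma>"
    by (rule convexD[OF cv k1 k2]) auto
  from cone[OF this, of 2] have "2 *\<^sub>R ((1/2) *\<^sub>R (\<kappa> - c) + (1 - 1/2) *\<^sub>R (w + c)) \<in> \<Gamma>" by simp
  moreover have "2 *\<^sub>R ((1/2) *\<^sub>R (\<kappa> - c) + (1 - 1/2) *\<^sub>R (w + c)) = \<kappa> + w"
    by (simp add: algebra_simps)
  ultimately show ?thesis by simp
qed

lemma F_mono_axis:
  fixes \<Gamma> :: "(real^'n) set" and F :: "real^'n \<Rightarrow> real"
  assumes AF: "admissible_F \<Gamma> F" and z: "z \<in> \<Gamma>" and c: "c \<ge> 0"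
  shows "F z \<le> F (z + c *\<^sub>R axis a 1)"
proof (cases "c = 0")
  case True then show ?thesis by simp
next
  case False
  then have cp: "c > 0" using c by simp
  have G: "admissible_cone \<Gamma>" and sm: "smooth_on \<Gamma> F" and pos: "\<And>k i. k \<in> \<Gamma> \<Longrightarrow> dd F k (axis i 1) > 0"
    using AF unfolding admissible_F_def by auto
  have inG: "z + s *\<^sub>R axis a 1 \<in> \<Gamma>" if "s \<ge> 0" for s
    by (rule cone_up[OF G z]) (use that in \<open>auto simp: axis_def\<close>)
  have "(\<lambda>s. F (z + s *\<^sub>R axis a 1)) 0 < (\<lambda>s. F (z + s *\<^sub>R axis a 1)) c"
  proof (rule DERIV_pos_imp_increasing[OF cp])
    fix s :: real assume s: "0 \<le> s" "s \<le> c"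
    have "((\<lambda>r. ddn [] F (z + r *\<^sub>R axis a 1)) has_real_derivative ddn [axis a 1] F (z + s *\<^sub>R axis a 1)) (at s)"
      by (rule smooth_line_deriv[OF sm inG[OF s(1)]])
    moreover have "ddn [axis a 1] F (z + s *\<^sub>R axis a 1) > 0" using pos[OF inG[OF s(1)]] by simp
    ultimately show "\<exists>y. ((\<lambda>s. F (z + s *\<^sub>R axis a 1)) has_real_derivative y) (at s) \<and> 0 < y" by auto
  qed
  then show ?thesis by simp
qed

lemma F_mono:
  fixes \<Gamma> :: "(real^'n) set" and F :: "real^'n \<Rightarrow> real"
  assumes AF: "admissible_F \<Gamma> F" and k: "\<kappa> \<in> \<Gamma>" and w: "\<And>i. w $ i \<ge> 0"
  shows "F \<kappa> \<le> F (\<kappa> + w)"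
proof -
  have G: "admissible_cone \<Gamma>" using AF unfolding admissible_F_def by auto
  have "F \<kappa> \<le> F (\<kappa> + (\<chi> i. if i \<in> A then w $ i else 0))" if "finite A" for A :: "'n set"
    using that
  proof (induction A rule: finite_induct)
    case empty
    have "(\<chi> i. if i \<in> {} then w $ i else 0) = (0::real^'n)" by (simp add: vec_eq_iff)
    then show ?case by simp
  next
    case (insert a A)
    define z where "z = \<kappa> + (\<chi> i. if i \<in> A then w $ i else 0)"
    have zG: "z \<in> \<Gamma>" unfolding z_def by (rule cone_up[OF G k]) (simp add: w)
    have m: "F z \<le> F (z + (w $ a) *\<^sub>R axis a 1)" by (rule F_mono_axis[OF AF zG w])
    have e:  "z + (w $ a) *\<^sub>R axis a 1 = \<kappa> + (\<chi> i. if i \<in> insert a A then w $ i else 0)"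
      unfolding z_def using insert(2) by (auto simp: vec_eq_iff axis_def)
    have "F \<kappa> \<le> F z" using insert.IH unfolding z_def .
    then show ?case using m e by (metis order_trans)
  qed
  from this[of UNIV] show ?thesis by (simp add: vec_eq_iff)
qed



lemma time_int_Icc: "t \<in> time_int T \<Longrightarrow> {0..t} \<subseteq> time_int T"
proof
  fix s assume t: "t \<in> time_int T" and s: "s \<in> {0..t}"
  have st: "ereal s \<le> ereal t" using s by simp
  then show "s \<in> time_int T" using t s le_less_trans[OF st] unfolding time_int_def by auto
qed

lemma GEO:
  fixes \<Gamma> :: "(real^'n) set" and F :: "real^'n \<Rightarrow> real" and p :: real
    and u :: "real \<Rightarrow> real^'m \<Rightarrow> real" and T :: ereal
    and g :: "real \<times> (real^'m) \<Rightarrow> real" and S :: "(real \<times> (real^'m)) set"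
  assumes AF: "admissible_F \<Gamma> F" and pp: "p > 0"
    and fs: "flow_solution \<Gamma> F p u T"
    and SS: "time_int T \<times> (UNIV - {0}) \<subseteq> S" and sm: "smooth_on S g"
    and geqA: "\<forall>s\<in>time_int T. \<forall>y. y \<noteq> 0 \<longrightarrow> g (s, y) = u s (y /\<^sub>R norm y)"
    and t: "t \<in> time_int T" "t > 0" and x: "x \<in> sphere_n"
    and ext: "(\<forall>y\<in>sphere_n. u t y \<le> u t x) \<or> (\<forall>y\<in>sphere_n. u t x \<le> u t y)"
  shows "\<exists>D. ((\<lambda>s. g (s, x)) has_real_derivative D) (at t) \<and> D > 0 \<and>
    ((\<forall>y\<in>sphere_n. u t y \<le> u t x) \<longrightarrow> D \<le> (real CARD('n) * (cosh (u t x) / sinh (u t x))) powr (-p)) \<and>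
    ((\<forall>y\<in>sphere_n. u t x \<le> u t y) \<longrightarrow> D \<ge> (real CARD('n) * (cosh (u t x) / sinh (u t x))) powr (-p))"
proof -
  have geq: "\<And>s y. s \<in> time_int T \<Longrightarrow> y \<noteq> 0 \<Longrightarrow> g (s, y) = u s (y /\<^sub>R norm y)" using geqA by blast
  have nx: "norm x = 1" using x unfolding sphere_n_def by simp
  have xx: "x \<bullet> x = 1" using nx by (simp add: norm_eq_1)
  define U where "U = u t x"
  have Upos: "U > 0" using fs t x unfolding flow_solution_def U_def by blast
  have sU: "sinh U > 0" using Upos by simp
  have cU: "cosh U > 0" by simp
  have hyp: "cosh U ^ 2 - sinh U ^ 2 = 1" by (simp add: cosh_square_eq)
  define L where "L = cosh U / sinh U"
  have Lpos: "L > 0" unfolding L_def using sU cU by simp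
  define D where "D = ddn [(1::real, 0::real^'m)] g (t, x)"
  have tS: "(t, x) \<in> S" using SS t x nx by auto
  have "((\<lambda>s. ddn [] g ((t, x) + s *\<^sub>R (1, 0))) has_real_derivative D) (at 0)"
    unfolding D_def by (rule smooth_line_deriv0[OF sm tS])
  then have "((\<lambda>s. g (s + t, x)) has_real_derivative D) (at 0)" by (simp add: add.commute)
  then have Dd: "((\<lambda>s. g (s, x)) has_real_derivative D) (at t)"
    using DERIV_shift[of "\<lambda>s. g (s, x)" D 0 t] by simp
  have spat: "\<exists>h2. dd (gpos (u t)) x v = (0, sinh U *\<^sub>R v) \<and>
      dd (\<lambda>y. dd (gpos (u t)) y v) x v = (sinh U * h2, (cosh U * h2 - (v \<bullet> v) * sinh U) *\<^sub>R x) \<and>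
      ((\<forall>y\<in>sphere_n. u t y \<le> u t x) \<longrightarrow> h2 \<le> 0) \<and> ((\<forall>y\<in>sphere_n. u t x \<le> u t y) \<longrightarrow> h2 \<ge> 0)"
    if v: "v \<in> tang x" for v
  proof -
    have vx: "v \<bullet> x = 0" using v unfolding tang_def by simp
    have nz: "x + s *\<^sub>R v \<noteq> 0" for s
    proof
      assume "x + s *\<^sub>R v = 0"
      then have "(x + s *\<^sub>R v) \<bullet> x = 0" by simp
      then show False using xx vx by (simp add: inner_add_left)
    qed
    define w where "w = ((0::real), v)"
    define h where "h = (\<lambda>s. ddn [] g ((t, x) + s *\<^sub>R w))"
    define h1 where "h1 = (\<lambda>s. ddn [w] g ((t, x) + s *\<^sub>R w))"
    define h2 where "h2 = ddn [w, w] g (t, x)"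
    have inS: "(t, x) + s *\<^sub>R w \<in> S" for s using SS t nz unfolding w_def by auto
    have hd: "(h has_real_derivative h1 s) (at s)" for s
      unfolding h_def h1_def by (rule smooth_line_deriv[OF sm inS])
    have h1d': "(h1 has_real_derivative ddn [w, w] g ((t, x) + 0 *\<^sub>R w)) (at 0)"
      unfolding h1_def by (rule smooth_line_deriv[OF sm inS])
    have h1d: "(h1 has_real_derivative h2) (at 0)" using h1d' unfolding h2_def by simp
    have hw: "h s = u t ((x + s *\<^sub>R v) /\<^sub>R norm (x + s *\<^sub>R v))" for s
      unfolding h_def w_def using geq[OF t(1) nz[of s]] by simp
    have sph: "(x + s *\<^sub>R v) /\<^sub>R norm (x + s *\<^sub>R v) \<in> sphere_n" for s
      unfolding sphere_n_def using nz[of s] by simp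
    have h0: "h 0 = U" using hw[of 0] nx unfolding U_def by simp
    have res: "h1 0 = 0 \<and> ((\<forall>y\<in>sphere_n. u t y \<le> u t x) \<longrightarrow> h2 \<le> 0) \<and> ((\<forall>y\<in>sphere_n. u t x \<le> u t y) \<longrightarrow> h2 \<ge> 0)"
    proof (cases "\<forall>y\<in>sphere_n. u t y \<le> u t x")
      case True
      have "h1 0 = 0 \<and> h2 \<le> 0"
        by (rule second_deriv_max[OF hd h1d]) (use True sph hw h0 U_def in auto)
      moreover have "h2 \<ge> 0" if "\<forall>y\<in>sphere_n. u t x \<le> u t y"
        by (rule conjunct2[OF second_deriv_min[OF hd h1d]]) (use that sph hw h0 U_def in auto)
      ultimately show ?thesis using True by auto
    next
      case False
      then have mn: "\<forall>y\<in>sphere_n. u t x \<le> u t y" using ext by auto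
      have "h1 0 = 0 \<and> h2 \<ge> 0"
        by (rule second_deriv_min[OF hd h1d]) (use mn sph hw h0 U_def in auto)
      then show ?thesis using False by auto
    qed
    have "dd (gpos (u t)) x v = (0, sinh (u t x) *\<^sub>R v)"
      by (rule SP(1)[OF nx vx hd h1d _ hw]) (use res in auto)
    moreover have "dd (\<lambda>y. dd (gpos (u t)) y v) x v = (sinh (u t x) * h2, (cosh (u t x) * h2 - (v \<bullet> v) * sinh (u t x)) *\<^sub>R x)"
      by (rule SP(2)[OF nx vx hd h1d _ hw]) (use res in auto)
    ultimately show ?thesis using res U_def by auto
  qed
  obtain N where N: "outer_normal (u t) x N" using fs t x unfolding flow_solution_def by blast
  have Neq: "N = (sinh U, cosh U *\<^sub>R x)"
    unfolding U_def by (rule normal_at_crit[OF nx]) (use Upos U_def spat N in auto)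
  have fsN: "(\<exists>\<kappa>::real^'n. principal_curvatures (u t) x N \<kappa>) \<and>
           (\<forall>\<kappa>. principal_curvatures (u t) x N \<kappa> \<longrightarrow>
              \<kappa> \<in> \<Gamma> \<and>
              mink (vector_derivative (\<lambda>s. gpos (u s) x) (at t within time_int T)) N
                = F \<kappa> powr (- p))"
    using fs t x N unfolding flow_solution_def by blast
  then obtain \<kappa> :: "real^'n" where pc: "principal_curvatures (u t) x N \<kappa>" by blast
  have kG: "\<kappa> \<in> \<Gamma>" and vel: "mink (vector_derivative (\<lambda>s. gpos (u s) x) (at t within time_int T)) N = F \<kappa> powr (- p)"
    using fsN pc by auto
  have Phi: "((\<lambda>s. (cosh (g (s, x)), sinh (g (s, x)) *\<^sub>R x)) has_vector_derivative
      (sinh (g (t, x)) * D, (cosh (g (t, x)) * D) *\<^sub>R x)) (at t within time_int T)"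
  proof -
    have a: "((\<lambda>s. cosh (g (s, x))) has_vector_derivative sinh (g (t, x)) * D) (at t within time_int T)"
      unfolding has_real_derivative_iff_has_vector_derivative[symmetric]
      by (rule has_field_derivative_at_within, rule derivative_eq_intros Dd | simp)+
    have b: "((\<lambda>s. sinh (g (s, x))) has_real_derivative cosh (g (t, x)) * D) (at t within time_int T)"
      by (rule has_field_derivative_at_within, rule derivative_eq_intros Dd | simp)+
    have c: "((\<lambda>s. sinh (g (s, x)) *\<^sub>R x) has_vector_derivative (cosh (g (t, x)) * D) *\<^sub>R x) (at t within time_int T)"
      using has_vector_derivative_scaleR[OF b has_vector_derivative_const[of x]] by simp
    show ?thesis by (rule has_vector_derivative_Pair[OF a c])
  qed
  have gtx: "g (t, x) = U" using geq[OF t(1)] nx unfolding U_def by (metis norm_zero scaleR_one zero_neq_one inverse_1)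
  have "((\<lambda>s. gpos (u s) x) has_vector_derivative (sinh U * D, (cosh U * D) *\<^sub>R x)) (at t within time_int T)"
  proof (rule has_vector_derivative_transform[OF t(1) _ Phi[unfolded gtx]])
    fix s assume s: "s \<in> time_int T"
    have "g (s, x) = u s x" using geq[OF s, of x] nx by (metis norm_zero scaleR_one zero_neq_one inverse_1)
    then show "gpos (u s) x = (cosh (g (s, x)), sinh (g (s, x)) *\<^sub>R x)" unfolding gpos_def using nx by simp
  qed
  moreover have "at t within time_int T \<noteq> bot"
  proof -
    have "t islimpt {0..t}" using t by simp
    then have "t islimpt time_int T" using time_int_Icc[OF t(1)] by (rule islimpt_subset)
    then show ?thesis using trivial_limit_within by blast
  qed
  ultimately have vd: "vector_derivative (\<lambda>s. gpos (u s) x) (at t within time_int T) = (sinh U * D, (cosh U * D) *\<^sub>R x)"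
    using vector_derivative_within by blast
  have "mink (sinh U * D, (cosh U * D) *\<^sub>R x) N = D * (cosh U ^ 2 - sinh U ^ 2)"
    unfolding Neq mink_def using xx by (simp add: algebra_simps power2_eq_square)
  then have DF: "D = F \<kappa> powr (- p)" using vel vd hyp by simp
  have Fpos: "F \<kappa> > 0" using AF kG unfolding admissible_F_def by blast
  have Dpos: "D > 0" using DF Fpos by simp
  obtain e :: "'n \<Rightarrow> real^'m" where et: "\<And>i. e i \<in> tang x"
    and eg: "\<And>i j. gmet (u t) x (e i) (e j) = (if i = j then 1 else 0)"
    and es: "\<And>i j. sff (u t) x N (e i) (e j) = (if i = j then \<kappa> $ i else 0)"
    using pc unfolding principal_curvatures_def by blast
  have kap: "\<exists>h2. \<kappa> $ i = L - h2 \<and> ((\<forall>y\<in>sphere_n. u t y \<le> u t x) \<longrightarrow> h2 \<le> 0) \<and> ((\<forall>y\<in>sphere_n. u t x \<le> u t y) \<longrightarrow> h2 \<ge> 0)" for i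
  proof -
    obtain h2 where H: "dd (gpos (u t)) x (e i) = (0, sinh U *\<^sub>R e i)"
      "dd (\<lambda>y. dd (gpos (u t)) y (e i)) x (e i) = (sinh U * h2, (cosh U * h2 - (e i \<bullet> e i) * sinh U) *\<^sub>R x)"
      "((\<forall>y\<in>sphere_n. u t y \<le> u t x) \<longrightarrow> h2 \<le> 0)" "((\<forall>y\<in>sphere_n. u t x \<le> u t y) \<longrightarrow> h2 \<ge> 0)"
      using spat[OF et[of i]] by blast
    have "1 = gmet (u t) x (e i) (e i)" using eg[of i i] by simp
    also have "\<dots> = (sinh U)\<^sup>2 * (e i \<bullet> e i)" unfolding gmet_def mink_def H(1) by (simp add: power2_eq_square)
    finally have ee: "e i \<bullet> e i = 1 / (sinh U)\<^sup>2" using sU by (simp add: field_simps)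
    have "\<kappa> $ i = sff (u t) x N (e i) (e i)" using es[of i i] by simp
    also have "\<dots> = - (- (sinh U * h2) * sinh U + cosh U * (cosh U * h2 - (e i \<bullet> e i) * sinh U))"
      unfolding sff_def H(2) Neq mink_def using xx by (simp add: algebra_simps)
    also have "\<dots> = - h2 * (cosh U ^ 2 - sinh U ^ 2) + (e i \<bullet> e i) * sinh U * cosh U"
      by (simp add: algebra_simps power2_eq_square)
    also have "\<dots> = L - h2" unfolding ee hyp L_def using sU by (simp add: field_simps power2_eq_square)
    finally show ?thesis using H(3,4) by blast
  qed
  have FL: "F (\<chi> i. L) = real CARD('n) * L"
  proof -
    have one: "(\<chi> i. (1::real)) \<in> \<Gamma>" using AF unfolding admissible_F_def admissible_cone_def pos_cone_def by auto
    have a: "F (L *\<^sub>R (\<chi> i. (1::real))) = L * F (\<chi> i. 1)" using AF one Lpos unfolding admissible_F_def by blast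
    have b: "L *\<^sub>R (\<chi> i. (1::real)) = (\<chi> i. L)" by (simp add: vec_eq_iff)
    have c: "F (\<chi> i. (1::real)) = real CARD('n)" using AF unfolding admissible_F_def by blast
    have "F (\<chi> i. L) = L * real CARD('n)" using a unfolding b c .
    then show ?thesis by (simp add: mult.commute)
  qed
  have nLpos: "real CARD('n) * L > 0" using Lpos by simp
  have maxc: "D \<le> (real CARD('n) * L) powr (-p)" if mx: "\<forall>y\<in>sphere_n. u t y \<le> u t x"
  proof -
    have kL: "\<kappa> $ i \<ge> L" for i using kap[of i] mx by auto
    have LG: "(\<chi> i. L) \<in> \<Gamma>" using AF Lpos unfolding admissible_F_def admissible_cone_def pos_cone_def by auto
    have "F (\<chi> i. L) \<le> F ((\<chi> i. L) + (\<kappa> - (\<chi> i. L)))"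
      by (rule F_mono[OF AF LG]) (use kL in simp)
    then have "real CARD('n) * L \<le> F \<kappa>" using FL by simp
    then show ?thesis using DF powr_mono2'[of "-p" "real CARD('n) * L" "F \<kappa>"] pp nLpos by simp
  qed
  have minc: "D \<ge> (real CARD('n) * L) powr (-p)" if mn: "\<forall>y\<in>sphere_n. u t x \<le> u t y"
  proof -
    have kL: "\<kappa> $ i \<le> L" for i using kap[of i] mn by auto
    have "F \<kappa> \<le> F (\<kappa> + ((\<chi> i. L) - \<kappa>))"
      by (rule F_mono[OF AF kG]) (use kL in simp)
    then have "F \<kappa> \<le> real CARD('n) * L" using FL by simp
    then show ?thesis using DF powr_mono2'[of "-p" "F \<kappa>" "real CARD('n) * L"] pp Fpos by simp
  qed
  show ?thesis using Dd Dpos maxc minc unfolding L_def U_def by blast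
qed



lemma first_touch:
  fixes \<psi> :: "real \<Rightarrow> 'a::metric_space \<Rightarrow> real"
  assumes K0: "compact K0"
    and cont: "continuous_on ({0..t2} \<times> K0) (\<lambda>z. \<psi> (fst z) (snd z))"
    and neg: "\<And>x. x \<in> K0 \<Longrightarrow> \<psi> 0 x < 0"
    and t0: "0 \<le> t0" "t0 \<le> t2" and x0: "x0 \<in> K0" and pos: "\<psi> t0 x0 \<ge> 0"
  shows "\<exists>t1 x1. 0 < t1 \<and> t1 \<le> t2 \<and> x1 \<in> K0 \<and> \<psi> t1 x1 \<ge> 0 \<and> (\<forall>y\<in>K0. \<psi> t1 y \<le> \<psi> t1 x1)
     \<and> (\<forall>s. 0 \<le> s \<and> s < t1 \<longrightarrow> \<psi> s x1 < 0)"
proof -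
  define A where "A = {0..t2} \<times> K0"
  define f where "f = (\<lambda>z. \<psi> (fst z) (snd z))"
  define K where "K = A \<inter> f -` {0..}"
  have cA: "compact A" unfolding A_def using K0 by (simp add: compact_Times)
  have clK: "closed K" unfolding K_def
    by (rule continuous_closed_preimage) (use cont cA compact_imp_closed in \<open>auto simp: A_def f_def\<close>)
  have cK: "compact K"
  proof -
    have "compact (A \<inter> K)" using cA clK by (rule compact_Int_closed)
    moreover have "A \<inter> K = K" unfolding K_def by auto
    ultimately show ?thesis by simp
  qed
  have "(t0, x0) \<in> K" using t0 x0 pos unfolding K_def A_def f_def by auto
  then have ne: "K \<noteq> {}" by blast
  obtain z where zK: "z \<in> K" and zmin: "\<And>y. y \<in> K \<Longrightarrow> fst z \<le> fst y"
    using continuous_attains_inf[OF cK ne continuous_on_fst[OF continuous_on_id]] by auto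
  define t1 where "t1 = fst z"
  have t1r: "0 \<le> t1" "t1 \<le> t2" and zk0: "snd z \<in> K0" and zpos: "\<psi> t1 (snd z) \<ge> 0"
    using zK unfolding K_def A_def f_def t1_def by auto
  have t1pos: "0 < t1"
  proof (rule ccontr)
    assume "\<not> 0 < t1" then have "t1 = 0" using t1r by simp
    then show False using neg[OF zk0] zpos by simp
  qed
  have K0ne: "K0 \<noteq> {}" using x0 by auto
  have csl: "continuous_on K0 (\<lambda>y. \<psi> t1 y)"
  proof -
    have "continuous_on K0 (f \<circ> (\<lambda>y. (t1, y)))"
      by (rule continuous_on_compose) (auto intro!: continuous_intros continuous_on_subset[OF cont] simp: t1r f_def)
    then show ?thesis by (simp add: o_def f_def)
  qed
  obtain x1 where x1: "x1 \<in> K0" and x1max: "\<And>y. y \<in> K0 \<Longrightarrow> \<psi> t1 y \<le> \<psi> t1 x1"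
    using continuous_attains_sup[OF K0 K0ne csl] by auto
  have p1: "\<psi> t1 x1 \<ge> 0" using x1max[OF zk0] zpos by simp
  have before: "\<psi> s x1 < 0" if "0 \<le> s" "s < t1" for s
  proof (rule ccontr)
    assume "\<not> \<psi> s x1 < 0"
    then have "(s, x1) \<in> K" unfolding K_def A_def f_def using that t1r x1 by auto
    from zmin[OF this] show False using that t1_def by simp
  qed
  show ?thesis using t1pos t1r x1 p1 x1max before by blast
qed



lemma final_arith:
  fixes r0 A B \<alpha> t U :: real
  assumes r0: "r0 > 0" "r0 \<le> U" and up: "U \<le> A + \<alpha> * t" and lo: "B + \<alpha> * t \<le> U"
  defines "q \<equiv> 1 - exp (-2 * r0)"
  defines "c \<equiv> max (max (2 / (q * exp B)) (exp A)) (2 * exp (-2 * B) / q)"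
  shows "0 < c" "1 / c \<le> sinh U * exp (- (\<alpha> * t))" "sinh U * exp (- (\<alpha> * t)) \<le> c"
    "cosh U / sinh U - 1 \<le> c * exp (- (2 * \<alpha>) * t)"
proof -
  have q: "0 < q" "q \<le> 1" unfolding q_def using r0 by auto
  have Up: "U > 0" using r0 by simp
  have sU: "sinh U > 0" using Up by simp
  show cp: "0 < c" unfolding c_def using q by (simp add: less_max_iff_disj)
  have sdef: "sinh U = (exp U - exp (- U)) / 2" by (simp add: sinh_def)
  have emU: "exp (- U) \<le> exp (-2 * r0) * exp U"
  proof -
    have "exp (- U) = exp (-2 * U) * exp U" by (simp flip: exp_add)
    also have "\<dots> \<le> exp (-2 * r0) * exp U" using r0 by simp
    finally show ?thesis .
  qed
  have qe: "q * exp U / 2 = (exp U - exp (-2 * r0) * exp U) / 2" by (simp add: q_def algebra_simps)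
  have slow: "sinh U \<ge> q * exp U / 2" unfolding sdef qe using emU by (simp add: divide_right_mono)
  have "sinh U \<le> exp U" using sdef exp_gt_zero[of "-U"] exp_gt_zero[of U] by argo
  then have "sinh U * exp (- (\<alpha> * t)) \<le> exp U * exp (- (\<alpha> * t))" by (simp add: mult_right_mono)
  also have "\<dots> = exp (U - \<alpha> * t)" by (simp flip: exp_add)
  also have "\<dots> \<le> exp A" using up by simp
  also have "\<dots> \<le> c" unfolding c_def by simp
  finally show "sinh U * exp (- (\<alpha> * t)) \<le> c" .
  have "1 / c \<le> 1 / (2 / (q * exp B))"
    by (rule divide_left_mono) (use q cp in \<open>auto simp: c_def\<close>)
  also have "\<dots> = q * exp B / 2" by simp
  also have "\<dots> \<le> q * exp (U - \<alpha> * t) / 2" using lo q by simp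
  also have "\<dots> = (q * exp U / 2) * exp (- (\<alpha> * t))" by (simp add: exp_diff exp_minus field_simps)
  also have "\<dots> \<le> sinh U * exp (- (\<alpha> * t))" using slow by simp
  finally show "1 / c \<le> sinh U * exp (- (\<alpha> * t))" .
  have "cosh U / sinh U - 1 = exp (- U) / sinh U"
    using sU by (simp add: field_simps cosh_def sinh_def)
  also have "\<dots> \<le> exp (- U) / (q * exp U / 2)"
    by (rule divide_left_mono[OF slow]) (use q sU in auto)
  also have "\<dots> = 2 * exp (-2 * U) / q" using q by (simp add: field_simps flip: exp_add)
  also have "\<dots> \<le> 2 * exp (-2 * B - 2 * \<alpha> * t) / q" using lo q by (simp add: divide_right_mono)
  also have "\<dots> = (2 * exp (-2 * B) / q) * exp (- (2 * \<alpha>) * t)" by (simp add: field_simps flip: exp_add)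
  also have "\<dots> \<le> c * exp (- (2 * \<alpha>) * t)" unfolding c_def by (rule mult_right_mono) auto
  finally show "cosh U / sinh U - 1 \<le> c * exp (- (2 * \<alpha>) * t)" .
qed

definition ffun :: "real \<Rightarrow> real \<Rightarrow> real" where
  "ffun C r = r + C * (ln (sinh r) - r)"

lemma ffun_deriv: fixes r C :: real shows "r > 0 \<Longrightarrow> (ffun C has_real_derivative (1 + C * (cosh r / sinh r - 1))) (at r)"
  unfolding ffun_def
  by (rule derivative_eq_intros refl | simp)+

lemma coth_gt1: fixes r :: real shows "r > 0 \<Longrightarrow> cosh r / sinh r > 1"
proof -
  assume r: "r > 0"
  have "cosh r - sinh r = exp (- r)" by (rule cosh_minus_sinh)
  then have "cosh r > sinh r" by (metis diff_gt_0_iff_gt exp_gt_zero)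
  then show ?thesis using r by simp
qed

lemma coth_mono: fixes r r0 :: real shows "0 < r0 \<Longrightarrow> r0 \<le> r \<Longrightarrow> cosh r / sinh r \<le> cosh r0 / sinh r0"
proof -
  assume r: "0 < r0" "r0 \<le> r"
  have "sinh (r - r0) \<ge> 0" using r sinh_real_nonneg_iff[of "r - r0"] by simp
  then have "cosh r0 * sinh r - cosh r * sinh r0 \<ge> 0" by (simp add: sinh_diff algebra_simps)
  moreover have "sinh r > 0" "sinh r0 > 0" using r by auto
  ultimately show ?thesis by (simp add: field_simps)
qed

lemma ffun_le: fixes r C :: real shows "r > 0 \<Longrightarrow> C \<ge> 0 \<Longrightarrow> ffun C r \<le> r"
proof -
  assume r: "r > 0" and C: "C \<ge> 0"
  have "sinh r < exp r" by (simp add: sinh_def field_simps add_pos_pos)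
  then have "ln (sinh r) < r" using r by (metis exp_gt_zero ln_exp ln_less_cancel_iff sinh_real_pos_iff)
  then show ?thesis unfolding ffun_def using C by (simp add: mult_nonneg_nonpos)
qed

lemma ffun_deriv_pos: fixes r C :: real shows "r > 0 \<Longrightarrow> C \<ge> 0 \<Longrightarrow> 1 + C * (cosh r / sinh r - 1) > 0"
proof -
  assume r: "r > 0" and C: "C \<ge> 0"
  have "C * (cosh r / sinh r - 1) \<ge> 0" using coth_gt1[OF r] C by simp
  then show ?thesis by linarith
qed

lemma ffun_strict: fixes a b C :: real shows "0 < a \<Longrightarrow> a < b \<Longrightarrow> C \<ge> 0 \<Longrightarrow> ffun C a < ffun C b"
proof -
  assume a: "0 < a" "a < b" "C \<ge> 0"
  show ?thesis
  proof (rule DERIV_pos_imp_increasing[OF a(2)])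
    fix x assume "a \<le> x" "x \<le> b"
    then have x: "x > 0" using a by simp
    show "\<exists>y. (ffun C has_real_derivative y) (at x) \<and> 0 < y"
      using ffun_deriv[OF x] ffun_deriv_pos[OF x a(3)] by blast
  qed
qed

lemma ffun_key:
  fixes p r0 r :: real
  assumes p: "p > 0" and r: "0 < r0" "r0 \<le> r"
  defines "C \<equiv> p * exp (p * (cosh r0 / sinh r0 - 1)) + 1"
  shows "(cosh r / sinh r) powr p < 1 + C * (cosh r / sinh r - 1)"
proof -
  define x where "x = cosh r / sinh r - 1"
  have x0: "x > 0" unfolding x_def using coth_gt1[of r] r by simp
  have xL: "x \<le> cosh r0 / sinh r0 - 1" unfolding x_def using coth_mono[OF r] by simp
  have "(cosh r / sinh r) powr p = exp (p * ln (1 + x))" unfolding x_def powr_def using x0 r coth_gt1[of r] by (simp add: x_def)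
  also have "\<dots> \<le> exp (p * x)" using p x0 ln_add_one_self_le_self[of x] by simp
  also have "\<dots> \<le> 1 + p * x * exp (p * x)"
  proof -
    have "1 - p * x \<le> exp (- (p * x))" using exp_ge_add_one_self[of "- (p*x)"] by simp
    then have "(1 - p * x) * exp (p * x) \<le> exp (- (p * x)) * exp (p * x)" by (simp add: mult_right_mono)
    then show ?thesis by (simp add: algebra_simps flip: exp_add)
  qed
  also have "\<dots> \<le> 1 + p * x * exp (p * (cosh r0 / sinh r0 - 1))"
    using p x0 xL by (simp add: mult_left_mono)
  also have "\<dots> < 1 + C * x" unfolding C_def using x0 by (simp add: algebra_simps)
  finally show ?thesis unfolding x_def .
qed



lemma left_contra:
  fixes Q :: "real \<Rightarrow> real"
  assumes "(Q has_real_derivative D) (at t1)" "D < 0" "t1 > 0" "Q t1 \<ge> 0"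
    "\<And>s. 0 \<le> s \<Longrightarrow> s < t1 \<Longrightarrow> Q s < 0"
  shows False
proof -
  obtain d where d: "d > 0" and dd: "\<And>h. h > 0 \<Longrightarrow> h < d \<Longrightarrow> Q t1 < Q (t1 - h)"
    using DERIV_neg_dec_left[OF assms(1,2)] by blast
  define h where "h = min d t1 / 2"
  have h: "h > 0" "h < d" "h \<le> t1" unfolding h_def using d assms(3) by auto
  have "Q t1 < Q (t1 - h)" using dd h by simp
  moreover have "Q (t1 - h) < 0" using assms(5)[of "t1 - h"] h by simp
  ultimately show False using assms(4) by simp
qed

lemma coth_pow_lt1:
  fixes L p :: real assumes "L > 1" "p > 0"
  shows "L powr (-p) < 1"
proof -
  have a: "1 < L powr p" using assms by simp
  have "1 / L powr p < 1" using a by (simp add: divide_less_eq)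
  then show ?thesis by (simp add: powr_minus_divide)
qed

theorem corollary3p6:
  fixes \<Gamma> :: "(real^'n) set" and F :: "real^'n \<Rightarrow> real" and p :: real
    and u :: "real \<Rightarrow> real^'m \<Rightarrow> real" and T :: ereal
  assumes "CARD('n) \<ge> 2" and "CARD('m) = CARD('n) + 1"
    and "admissible_F \<Gamma> F"
    and "p > 0" and "p > 1 \<longrightarrow> \<Gamma> = pos_cone"
    and "maximal_flow_solution \<Gamma> F p u T"
  shows "\<exists>c>0. \<forall>t\<in>time_int T. \<forall>x\<in>sphere_n.
           0 < 1 / c \<and>
           1 / c \<le> sinh (u t x) * exp (- t / real CARD('n) powr p) \<and>
           sinh (u t x) * exp (- t / real CARD('n) powr p) \<le> c \<and>
           cosh (u t x) / sinh (u t x) - 1 \<le> c * exp (- (2 / real CARD('n) powr p) * t)"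
proof -
  have AF: "admissible_F \<Gamma> F" and pp: "p > 0" using assms by auto
  have Tpos: "T > 0" and fs: "flow_solution \<Gamma> F p u T"
    using assms(6) unfolding maximal_flow_solution_def by auto
  obtain S g where SS: "time_int T \<times> (UNIV - {0}) \<subseteq> S" and sm: "smooth_on S g"
    and geq0: "\<forall>z\<in>time_int T \<times> (UNIV - {0}). g z = (\<lambda>(t, y). u t (y /\<^sub>R norm y)) z"
    using fs unfolding flow_solution_def smooth_on_set_def by blast
  have geq: "\<And>s y. s \<in> time_int T \<Longrightarrow> y \<noteq> 0 \<Longrightarrow> g (s, y) = u s (y /\<^sub>R norm y)" using geq0 by auto
  have gsph: "g (s, y) = u s y" if "s \<in> time_int T" "y \<in> sphere_n" for s y
  proof -
    have ny: "norm y = 1" using that unfolding sphere_n_def by simp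
    then have "y \<noteq> 0" by auto
    then show ?thesis using geq[OF that(1), of y] ny by simp
  qed
  have upos: "u s y > 0" if "s \<in> time_int T" "y \<in> sphere_n" for s y
    using fs that unfolding flow_solution_def by blast
  have sph_eq: "sphere_n = sphere (0::real^'m) 1" unfolding sphere_n_def by auto
  have csph: "compact (sphere_n :: (real^'m) set)" unfolding sph_eq by simp
  have nesph: "(sphere_n :: (real^'m) set) \<noteq> {}" unfolding sph_eq by simp
  have t0: "0 \<in> time_int T" unfolding time_int_def using Tpos by (simp add: zero_ereal_def)
  have gcont: "continuous_on S g" using sm unfolding smooth_on_def by (metis ddn.simps(1))
  have ucont: "continuous_on ({0..t2} \<times> sphere_n) (\<lambda>z. u (fst z) (snd z))" if t2: "t2 \<in> time_int T" for t2
  proof -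
    have sub: "{0..t2} \<times> sphere_n \<subseteq> S"
    proof
      fix z assume "z \<in> {0..t2} \<times> (sphere_n :: (real^'m) set)"
      then have "fst z \<in> time_int T" "snd z \<noteq> 0" using time_int_Icc[OF t2] unfolding sphere_n_def by auto
      then show "z \<in> S" using SS by (cases z) auto
    qed
    have "continuous_on ({0..t2} \<times> sphere_n) g" using continuous_on_subset[OF gcont sub] .
    then show ?thesis
      by (rule continuous_on_eq) (use gsph time_int_Icc[OF t2] in auto)
  qed
  have cont0: "continuous_on sphere_n (\<lambda>y. u 0 y)"
  proof -
    have "continuous_on sphere_n ((\<lambda>z. u (fst z) (snd z)) \<circ> (\<lambda>y. (0::real, y)))"
      by (rule continuous_on_compose) (auto intro!: continuous_intros continuous_on_subset[OF ucont[OF t0]])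
    then show ?thesis by (simp add: o_def)
  qed
  obtain xM where xM: "xM \<in> sphere_n" "\<And>y. y \<in> sphere_n \<Longrightarrow> u 0 y \<le> u 0 xM"
    using continuous_attains_sup[OF csph nesph cont0] by auto
  obtain xm where xm: "xm \<in> sphere_n" "\<And>y. y \<in> sphere_n \<Longrightarrow> u 0 xm \<le> u 0 y"
    using continuous_attains_inf[OF csph nesph cont0] by auto
  define m0 where "m0 = u 0 xM"
  define \<mu>0 where "\<mu>0 = u 0 xm"
  have mu0: "\<mu>0 > 0" unfolding \<mu>0_def using upos[OF t0 xm(1)] .
  define n where "n = real CARD('n)"
  have npos: "n > 0" unfolding n_def by simp
  define np where "np = n powr p"
  have nppos: "np > 0" unfolding np_def using npos by simp
  have npne: "np \<noteq> 0" using nppos by simp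
  have npinv: "n powr (-p) = 1 / np" unfolding np_def by (simp add: powr_minus_divide)
  have tnn: "t \<ge> 0" if "t \<in> time_int T" for t using that unfolding time_int_def by simp
  have geqA: "\<forall>s\<in>time_int T. \<forall>y. y \<noteq> 0 \<longrightarrow> g (s, y) = u s (y /\<^sub>R norm y)" using geq by blast
  note geo = GEO[OF AF pp fs SS sm geqA]
  have upper: "u t x \<le> m0 + 1 + t / np" if t2: "t \<in> time_int T" and x2: "x \<in> sphere_n" for t x
  proof (rule ccontr)
    assume neg: "\<not> u t x \<le> m0 + 1 + t / np"
    define \<psi> where "\<psi> = (\<lambda>s y. u s y - (m0 + 1 + s / np))"
    have pos: "\<psi> t x \<ge> 0" using neg unfolding \<psi>_def by simp
    have c\<psi>: "continuous_on ({0..t} \<times> sphere_n) (\<lambda>z. \<psi> (fst z) (snd z))"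
      unfolding \<psi>_def by (intro continuous_on_diff ucont[OF t2] continuous_intros) (use nppos in auto)
    have n0: "\<psi> 0 y < 0" if "y \<in> sphere_n" for y using xM(2)[OF that] unfolding \<psi>_def m0_def by simp
    obtain t1 x1 where t1: "0 < t1" "t1 \<le> t" and x1: "x1 \<in> sphere_n" and p1: "\<psi> t1 x1 \<ge> 0"
      and mx: "\<forall>y\<in>sphere_n. \<psi> t1 y \<le> \<psi> t1 x1" and bef: "\<forall>s. 0 \<le> s \<and> s < t1 \<longrightarrow> \<psi> s x1 < 0"
      using first_touch[OF csph c\<psi> n0 tnn[OF t2] order_refl x2 pos] by blast
    have t1T: "t1 \<in> time_int T" using time_int_Icc[OF t2] t1 by auto
    have mxu: "\<forall>y\<in>sphere_n. u t1 y \<le> u t1 x1" using mx unfolding \<psi>_def by auto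
    obtain D where Dd: "((\<lambda>s. g (s, x1)) has_real_derivative D) (at t1)"
      and Db: "D \<le> (n * (cosh (u t1 x1) / sinh (u t1 x1))) powr (-p)"
      using geo[OF t1T t1(1) x1] mxu unfolding n_def by blast
    define L where "L = cosh (u t1 x1) / sinh (u t1 x1)"
    have L1: "L > 1" unfolding L_def by (rule coth_gt1[OF upos[OF t1T x1]])
    have "(n * L) powr (-p) = n powr (-p) * L powr (-p)" using npos L1 by (simp add: powr_mult)
    also have "\<dots> < n powr (-p)" using coth_pow_lt1[OF L1 pp] npos by simp
    finally have Dlt: "D < 1 / np" using Db npinv unfolding L_def by simp
    show False
    proof (rule left_contra[of "\<lambda>s. g (s, x1) - (m0 + 1 + s / np)" "D - 1 / np" t1])
      show "((\<lambda>s. g (s, x1) - (m0 + 1 + s / np)) has_real_derivative D - 1 / np) (at t1)"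
        by (rule derivative_eq_intros Dd refl | simp add: npne field_simps)+
      show "D - 1 / np < 0" using Dlt by simp
      show "0 < t1" by fact
      show "0 \<le> g (t1, x1) - (m0 + 1 + t1 / np)" using p1 gsph[OF t1T x1] unfolding \<psi>_def by simp
      fix s assume s: "0 \<le> s" "s < t1"
      then have sT: "s \<in> time_int T" using time_int_Icc[OF t1T] by auto
      show "g (s, x1) - (m0 + 1 + s / np) < 0" using bef s gsph[OF sT x1] unfolding \<psi>_def by simp
    qed
  qed
  define r0 where "r0 = \<mu>0 / 2"
  have r0pos: "r0 > 0" unfolding r0_def using mu0 by simp
  have lowA: "r0 \<le> u t x" if t2: "t \<in> time_int T" and x2: "x \<in> sphere_n" for t x
  proof (rule ccontr)
    assume neg: "\<not> r0 \<le> u t x"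
    define \<psi> where "\<psi> = (\<lambda>s y. r0 - u s y)"
    have pos: "\<psi> t x \<ge> 0" using neg unfolding \<psi>_def by simp
    have c\<psi>: "continuous_on ({0..t} \<times> sphere_n) (\<lambda>z. \<psi> (fst z) (snd z))"
      unfolding \<psi>_def by (intro continuous_on_diff ucont[OF t2] continuous_intros)
    have n0: "\<psi> 0 y < 0" if "y \<in> sphere_n" for y using xm(2)[OF that] mu0 unfolding \<psi>_def \<mu>0_def r0_def by simp
    obtain t1 x1 where t1: "0 < t1" "t1 \<le> t" and x1: "x1 \<in> sphere_n" and p1: "\<psi> t1 x1 \<ge> 0"
      and mx: "\<forall>y\<in>sphere_n. \<psi> t1 y \<le> \<psi> t1 x1" and bef: "\<forall>s. 0 \<le> s \<and> s < t1 \<longrightarrow> \<psi> s x1 < 0"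
      using first_touch[OF csph c\<psi> n0 tnn[OF t2] order_refl x2 pos] by blast
    have t1T: "t1 \<in> time_int T" using time_int_Icc[OF t2] t1 by auto
    have mnu: "\<forall>y\<in>sphere_n. u t1 x1 \<le> u t1 y" using mx unfolding \<psi>_def by auto
    obtain D where Dd: "((\<lambda>s. g (s, x1)) has_real_derivative D) (at t1)" and Dp: "D > 0"
      using geo[OF t1T t1(1) x1] mnu by blast
    show False
    proof (rule left_contra[of "\<lambda>s. r0 - g (s, x1)" "- D" t1])
      show "((\<lambda>s. r0 - g (s, x1)) has_real_derivative - D) (at t1)"
        by (rule derivative_eq_intros Dd refl | simp add: npne field_simps)+
      show "- D < 0" using Dp by simp
      show "0 < t1" by fact
      show "0 \<le> r0 - g (t1, x1)" using p1 gsph[OF t1T x1] unfolding \<psi>_def by simp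
      fix s assume s: "0 \<le> s" "s < t1"
      then have sT: "s \<in> time_int T" using time_int_Icc[OF t1T] by auto
      show "r0 - g (s, x1) < 0" using bef s gsph[OF sT x1] unfolding \<psi>_def by simp
    qed
  qed
  define C where "C = p * exp (p * (cosh r0 / sinh r0 - 1)) + 1"
  have Cpos: "C > 0" unfolding C_def using pp by (simp add: add_pos_pos)
  define B0 where "B0 = ffun C \<mu>0 - 1"
  have lowB: "B0 + t / np \<le> ffun C (u t x)" if t2: "t \<in> time_int T" and x2: "x \<in> sphere_n" for t x
  proof (rule ccontr)
    assume neg: "\<not> B0 + t / np \<le> ffun C (u t x)"
    define \<psi> where "\<psi> = (\<lambda>s y. B0 + s / np - ffun C (u s y))"
    have pos: "\<psi> t x \<ge> 0" using neg unfolding \<psi>_def by simp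
    have fcont: "continuous_on {0<..} (ffun C)"
      using ffun_deriv by (meson DERIV_isCont continuous_at_imp_continuous_on greaterThan_iff)
    have c1: "continuous_on ({0..t} \<times> sphere_n) (\<lambda>z. ffun C (u (fst z) (snd z)))"
    proof (rule continuous_on_compose2[OF fcont ucont[OF t2]])
      show "(\<lambda>z. u (fst z) (snd z)) ` ({0..t} \<times> sphere_n) \<subseteq> {0<..}"
        using upos time_int_Icc[OF t2] by auto
    qed
    have c\<psi>: "continuous_on ({0..t} \<times> sphere_n) (\<lambda>z. \<psi> (fst z) (snd z))"
      unfolding \<psi>_def by (intro continuous_on_diff c1 continuous_intros) (use nppos in auto)
    have n0: "\<psi> 0 y < 0" if "y \<in> sphere_n" for y
    proof -
      have "ffun C \<mu>0 \<le> ffun C (u 0 y)"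
        using xm(2)[OF that] ffun_strict[OF mu0 _ less_imp_le[OF Cpos]] unfolding \<mu>0_def
        by (cases "u 0 xm = u 0 y") (auto simp: less_imp_le)
      then show ?thesis unfolding \<psi>_def B0_def by simp
    qed
    obtain t1 x1 where t1: "0 < t1" "t1 \<le> t" and x1: "x1 \<in> sphere_n" and p1: "\<psi> t1 x1 \<ge> 0"
      and mx: "\<forall>y\<in>sphere_n. \<psi> t1 y \<le> \<psi> t1 x1" and bef: "\<forall>s. 0 \<le> s \<and> s < t1 \<longrightarrow> \<psi> s x1 < 0"
      using first_touch[OF csph c\<psi> n0 tnn[OF t2] order_refl x2 pos] by blast
    have t1T: "t1 \<in> time_int T" using time_int_Icc[OF t2] t1 by auto
    have mnu: "\<forall>y\<in>sphere_n. u t1 x1 \<le> u t1 y"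
    proof
      fix y :: "real^'m" assume y: "y \<in> sphere_n"
      have "ffun C (u t1 x1) \<le> ffun C (u t1 y)" using mx y unfolding \<psi>_def by auto
      then show "u t1 x1 \<le> u t1 y"
        using ffun_strict[OF upos[OF t1T y] _ less_imp_le[OF Cpos], of "u t1 x1"] by force
    qed
    define U where "U = u t1 x1"
    define L where "L = cosh U / sinh U"
    have Upos: "U > 0" unfolding U_def using upos[OF t1T x1] .
    have Ur0: "r0 \<le> U" unfolding U_def using lowA[OF t1T x1] .
    have L1: "L > 1" unfolding L_def by (rule coth_gt1[OF Upos])
    obtain D where Dd: "((\<lambda>s. g (s, x1)) has_real_derivative D) (at t1)"
      and Db: "D \<ge> (n * L) powr (-p)"
      using geo[OF t1T t1(1) x1] mnu unfolding n_def L_def U_def by blast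
    define f1 where "f1 = 1 + C * (L - 1)"
    have key: "L powr p < f1" unfolding f1_def L_def C_def by (rule ffun_key[OF pp r0pos Ur0])
    have Lp: "L powr p > 0" using L1 by simp
    have f1p: "f1 \<ge> 0" using key Lp by linarith
    have "(n * L) powr (-p) = (1 / np) * (1 / L powr p)"
      using npos L1 npinv by (simp add: powr_mult powr_minus_divide)
    then have "f1 * D \<ge> f1 * ((1 / np) * (1 / L powr p))"
      using Db f1p by (intro mult_left_mono) auto
    moreover have "f1 * ((1 / np) * (1 / L powr p)) > 1 / np"
    proof -
      have "f1 / L powr p > 1" using key Lp by simp
      then have "(1 / np) * (f1 / L powr p) > (1 / np) * 1" using nppos by (intro mult_strict_left_mono) auto
      then show ?thesis by (simp add: field_simps)
    qed
    ultimately have fD: "f1 * D > 1 / np" by linarith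
    have gt1: "g (t1, x1) = U" using gsph[OF t1T x1] U_def by simp
    have fd: "(ffun C has_real_derivative f1) (at (g (t1, x1)))"
      unfolding gt1 f1_def L_def by (rule ffun_deriv[OF Upos])
    show False
    proof (rule left_contra[of "\<lambda>s. B0 + s / np - ffun C (g (s, x1))" "1 / np - f1 * D" t1])
      show "((\<lambda>s. B0 + s / np - ffun C (g (s, x1))) has_real_derivative 1 / np - f1 * D) (at t1)"
        by (rule derivative_eq_intros DERIV_chain2[OF fd Dd] refl | simp add: npne field_simps)+
      show "1 / np - f1 * D < 0" using fD by simp
      show "0 < t1" by fact
      show "0 \<le> B0 + t1 / np - ffun C (g (t1, x1))" using p1 gsph[OF t1T x1] unfolding \<psi>_def by simp
      fix s assume s: "0 \<le> s" "s < t1"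
      then have sT: "s \<in> time_int T" using time_int_Icc[OF t1T] by auto
      show "B0 + s / np - ffun C (g (s, x1)) < 0" using bef s gsph[OF sT x1] unfolding \<psi>_def by simp
    qed
  qed
  have lower: "B0 + t / np \<le> u t x" if "t \<in> time_int T" "x \<in> sphere_n" for t x
    using lowB[OF that] ffun_le[OF upos[OF that] less_imp_le[OF Cpos]] by simp
  define q where "q = 1 - exp (-2 * r0)"
  define c where "c = max (max (2 / (q * exp B0)) (exp (m0 + 1))) (2 * exp (-2 * B0) / q)"
  have fa: "0 < c \<and> 1 / c \<le> sinh (u t x) * exp (- ((1/np) * t)) \<and> sinh (u t x) * exp (- ((1/np) * t)) \<le> c
     \<and> cosh (u t x) / sinh (u t x) - 1 \<le> c * exp (- (2 * (1/np)) * t)"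
    if "t \<in> time_int T" "x \<in> sphere_n" for t x
    using final_arith[OF r0pos lowA[OF that], of "m0 + 1" "1/np" t B0] upper[OF that] lower[OF that]
    unfolding c_def q_def by simp
  have c0: "0 < c" using fa[OF t0 xM(1)] by simp
  show ?thesis
  proof (intro exI[of _ c] conjI c0 ballI)
    fix t :: real and x :: "real^'m" assume tx: "t \<in> time_int T" "x \<in> sphere_n"
    have e1: "- t / real CARD('n) powr p = - ((1/np) * t)" unfolding np_def n_def by simp
    have e2: "- (2 / real CARD('n) powr p) * t = - (2 * (1/np)) * t" unfolding np_def n_def by simp
    show "0 < 1 / c" using c0 by simp
    show "1 / c \<le> sinh (u t x) * exp (- t / real CARD('n) powr p)" using fa[OF tx] unfolding e1 by simp
    show "sinh (u t x) * exp (- t / real CARD('n) powr p) \<le> c" using fa[OF tx] unfolding e1 by simp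
    show "cosh (u t x) / sinh (u t x) - 1 \<le> c * exp (- (2 / real CARD('n) powr p) * t)" using fa[OF tx] unfolding e2 by simp
  qed
qed


end
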